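(* Consider the binary CA-RRM with affine indices $s_f(A)=\alpha_f+\beta_f^\top\psi(A)$, $f\in\mathcal F$, normalized by $(\alpha_{f_0},\beta_{f_0})=(0,0)$ for a baseline rule $f_0\in\mathcal F$, and with $p(A)\in(0,1)$ for all menus in the support. Let $d=\dim\psi$. Suppose there exist $d+1$ feature values $x^{(0)},\dots,x^{(d)}\in\mathbb R^d$ such that: (G1) for each $k\in\{0,\dots,d\}$ there exist menus $A_{k1},\dots,A_{kM_k}$ with $\psi(A_{km})=x^{(k)}$ for all $m$, such that the $M_k\times|\mathcal F|$ matrix $H^{(k)}$ with rows $h(A_{k1})^\top,\dots,h(A_{kM_k})^\top$ has rank $|\mathcal F|-1$; (G2) the $(d+1)\times(d+1)$ matrix $X$ whose $k$-th row is $(1,(x^{(k)})^\top)$ has full rank $d+1$. Then the parameter vector $\{(\alpha_f,\beta_f)\}_{f\in\mathcal F}$ is globally identified from the population objects $\{p(A),\kappa^L(A),\kappa^R(A),\psi(A)\}$: any two normalized parameter vectors that generate, via the model, the same choice probabilities $p(A_{km})$ at all menus $A_{km}$ coincide.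
   Context: Binary choice setting. $\mathcal F$ is a finite set of rules, menus $A=\{L^1,L^2\}$. Each rule $f$ has deterministic decisive-side indicators $\kappa_f^L(A),\kappa_f^R(A)\in\{0,1\}$ (not both 1), indicating that $f$ is decisive and recommends the left, respectively right, option at $A$; $\mathcal I_L(A)=\{f:\kappa_f^L(A)=1\}$, $\mathcal I_R(A)=\{f:\kappa_f^R(A)=1\}$. $\psi$ maps menus to $\mathbb R^d$. The model specifies the probability of choosing $L^1$ as $$p(A)=\frac{\sum_{f}\kappa_f^L(A)\,\omega_f(\psi(A))}{\sum_{f}(\kappa_f^L(A)+\kappa_f^R(A))\,\omega_f(\psi(A))},\qquad \omega_f(x):=\exp(\alpha_f+\beta_f^\top x),$$ for menus where both $\mathcal I_L(A),\mathcal I_R(A)$ are nonempty. For such menus, $r(A):=p(A)/(1-p(A))$ and $h(A)\in\mathbb R^{|\mathcal F|}$ has entries $h_f(A)=\kappa_f^L(A)-r(A)\kappa_f^R(A)$. The menus $A_{km}$ in (G1) are assumed two-sided. *)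

theory Defs
  imports "HOL-Analysis.Analysis"
begin

text \<open>Binary CA-RRM. Rules form the finite type 'f (the set F = UNIV),
  menus have type 'm, features psi A :: real^'d. Indicators kappaL/kappaR are
  booleans (1 = True).\<close>

definition weight :: "('f \<Rightarrow> real) \<Rightarrow> ('f \<Rightarrow> real^'d) \<Rightarrow> 'f \<Rightarrow> real^'d \<Rightarrow> real" where
  "weight \<alpha> \<beta> f x = exp (\<alpha> f + \<beta> f \<bullet> x)"

definition choice_prob ::
  "('f::finite \<Rightarrow> 'm \<Rightarrow> bool) \<Rightarrow> ('f \<Rightarrow> 'm \<Rightarrow> bool) \<Rightarrow> ('m \<Rightarrow> real^'d)
   \<Rightarrow> ('f \<Rightarrow> real) \<Rightarrow> ('f \<Rightarrow> real^'d) \<Rightarrow> 'm \<Rightarrow> real" where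
  "choice_prob kL kR \<psi> \<alpha> \<beta> A =
     (\<Sum>f\<in>UNIV. of_bool (kL f A) * weight \<alpha> \<beta> f (\<psi> A)) /
     (\<Sum>f\<in>UNIV. (of_bool (kL f A) + of_bool (kR f A)) * weight \<alpha> \<beta> f (\<psi> A))"

definition two_sided :: "('f \<Rightarrow> 'm \<Rightarrow> bool) \<Rightarrow> ('f \<Rightarrow> 'm \<Rightarrow> bool) \<Rightarrow> 'm \<Rightarrow> bool" where
  "two_sided kL kR A \<longleftrightarrow> (\<exists>f. kL f A) \<and> (\<exists>f. kR f A)"

definition odds :: "('m \<Rightarrow> real) \<Rightarrow> 'm \<Rightarrow> real" where
  "odds p A = p A / (1 - p A)"

definition hvec :: "('f::finite \<Rightarrow> 'm \<Rightarrow> bool) \<Rightarrow> ('f \<Rightarrow> 'm \<Rightarrow> bool) \<Rightarrow> ('m \<Rightarrow> real) \<Rightarrow> 'm \<Rightarrow> real^'f" where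
  "hvec kL kR p A = (\<chi> f. of_bool (kL f A) - odds p A * of_bool (kR f A))"

text \<open>The (d+1)x(d+1) matrix X with k-th row (1, x^(k)); the index type 'd option
  has d+1 elements, None being the constant column.\<close>
definition design_matrix :: "('d option \<Rightarrow> real^'d) \<Rightarrow> real^('d::finite option)^('d option)" where
  "design_matrix x = (\<chi> k j. case j of None \<Rightarrow> 1 | Some i \<Rightarrow> x k $ i)"

end

theory Submission
  imports Defs
begin


lemma h_orth:
  fixes kL kR :: "'f::finite \<Rightarrow> 'm \<Rightarrow> bool"
  assumes ts: "two_sided kL kR A"
    and gen: "choice_prob kL kR \<psi> \<alpha> \<beta> A = p A"
  shows "hvec kL kR p A \<bullet> (\<chi> f. weight \<alpha> \<beta> f (\<psi> A)) = 0"
proof -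
  define W where "W f = weight \<alpha> \<beta> f (\<psi> A)" for f
  have Wpos: "W f > 0" for f by (simp add: W_def weight_def)
  define L where "L = (\<Sum>f\<in>UNIV. of_bool (kL f A) * W f)"
  define R where "R = (\<Sum>f\<in>UNIV. of_bool (kR f A) * W f)"
  obtain fl fr where fl: "kL fl A" and fr: "kR fr A" using ts unfolding two_sided_def by blast
  have "of_bool (kL fl A) * W fl \<le> L" unfolding L_def
    by (rule member_le_sum) (auto intro: less_imp_le Wpos)
  moreover have "W fl > 0" by (rule Wpos)
  ultimately have Lpos: "L > 0" using fl by simp
  have "of_bool (kR fr A) * W fr \<le> R" unfolding R_def
    by (rule member_le_sum) (auto intro: less_imp_le Wpos)
  moreover have "W fr > 0" by (rule Wpos)
  ultimately have Rpos: "R > 0" using fr by simp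
  have "p A = L / (L + R)" using gen
    by (simp add: choice_prob_def L_def R_def W_def distrib_right sum.distrib)
  then have p1: "p A = L / (L + R)" .
  have LR: "L + R > 0" using Lpos Rpos by simp
  have "L / (L + R) + R / (L + R) = 1" using LR by (simp add: add_divide_distrib[symmetric])
  then have p2: "1 - p A = R / (L + R)" using p1 by linarith
  have od: "odds p A = L / R" unfolding odds_def p2 unfolding p1 using Lpos Rpos by simp
  have "hvec kL kR p A \<bullet> (\<chi> f. W f) = (\<Sum>f\<in>UNIV. of_bool (kL f A) * W f) - odds p A * (\<Sum>f\<in>UNIV. of_bool (kR f A) * W f)"
    unfolding hvec_def inner_vec_def vec_lambda_beta inner_real_def sum_distrib_left
    unfolding sum_subtractf[symmetric]
    by (rule sum.cong) (simp_all add: algebra_simps)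
  also have "\<dots> = 0" using od Rpos by (simp add: L_def[symmetric] R_def[symmetric])
  finally show ?thesis by (simp add: W_def)
qed


theorem corollary1:
  fixes kL kR :: "'f::finite \<Rightarrow> 'm \<Rightarrow> bool"
    and \<psi> :: "'m \<Rightarrow> real^'d::finite"
    and p :: "'m \<Rightarrow> real"
    and f0 :: 'f
    and x :: "'d option \<Rightarrow> real^'d"
    and Menus :: "'d option \<Rightarrow> 'm set"
    and \<alpha> \<alpha>' :: "'f \<Rightarrow> real"
    and \<beta> \<beta>' :: "'f \<Rightarrow> real^'d"
  assumes not_both: "\<And>f A. \<not> (kL f A \<and> kR f A)"
    and p_interior: "\<And>k A. A \<in> Menus k \<Longrightarrow> 0 < p A \<and> p A < 1"
    and G1_finite: "\<And>k. finite (Menus k) \<and> Menus k \<noteq> {}"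
    and G1_feature: "\<And>k A. A \<in> Menus k \<Longrightarrow> \<psi> A = x k"
    and G1_two_sided: "\<And>k A. A \<in> Menus k \<Longrightarrow> two_sided kL kR A"
    and G1_rank: "\<And>k. dim (hvec kL kR p ` Menus k) = CARD('f) - 1"
    and G2: "rank (design_matrix x) = CARD('d option)"
    and norm1: "\<alpha> f0 = 0" "\<beta> f0 = 0"
    and norm2: "\<alpha>' f0 = 0" "\<beta>' f0 = 0"
    and gen1: "\<And>k A. A \<in> Menus k \<Longrightarrow> choice_prob kL kR \<psi> \<alpha> \<beta> A = p A"
    and gen2: "\<And>k A. A \<in> Menus k \<Longrightarrow> choice_prob kL kR \<psi> \<alpha>' \<beta>' A = p A"
  shows "\<alpha> = \<alpha>' \<and> \<beta> = \<beta>'"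
proof -
  have Wf0: "weight \<alpha> \<beta> f0 y = 1" "weight \<alpha>' \<beta>' f0 y = 1" for y
    using norm1 norm2 by (simp_all add: weight_def)
  have keyeq: "weight \<alpha> \<beta> f (x k) = weight \<alpha>' \<beta>' f (x k)" for f k
  proof -
    define S where "S = span (hvec kL kR p ` Menus k)"
    define C where "C = {y \<in> UNIV. \<forall>z \<in> S. orthogonal z y}"
    have "dim C + dim S = dim (UNIV :: (real^'f) set)"
      unfolding C_def by (rule dim_subspace_orthogonal_to_vectors) (auto simp: S_def)
    moreover have "dim S = CARD('f) - 1" using G1_rank by (simp add: S_def)
    moreover have "dim (UNIV :: (real^'f) set) = CARD('f)" by simp
    moreover have "CARD('f) > 0" by simp
    ultimately have dC: "dim C = 1" by arith
    have subC: "subspace C" unfolding C_def orthogonal_def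
      by (auto simp: subspace_def inner_add_right)
    define w where "w = (\<chi> f. weight \<alpha> \<beta> f (x k))"
    define w' where "w' = (\<chi> f. weight \<alpha>' \<beta>' f (x k))"
    have inC: "v \<in> C" if "\<And>A. A \<in> Menus k \<Longrightarrow> hvec kL kR p A \<bullet> v = 0" for v
    proof -
      have "\<forall>z \<in> S. z \<bullet> v = 0" unfolding S_def
      proof
        fix z assume "z \<in> span (hvec kL kR p ` Menus k)"
        then show "z \<bullet> v = 0"
          by (induction rule: span_induct_alt) (auto simp: that inner_add_left)
      qed
      then show ?thesis by (simp add: C_def orthogonal_def)
    qed
    have wC: "w \<in> C" unfolding w_def
      by (rule inC) (metis h_orth G1_two_sided gen1 G1_feature)
    have w'C: "w' \<in> C" unfolding w'_def
      by (rule inC) (metis h_orth G1_two_sided gen2 G1_feature)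
    have wnz: "w \<noteq> 0"
    proof
      assume "w = 0" then have "w $ f0 = 0" by simp
      then show False using Wf0 by (simp add: w_def)
    qed
    have "independent {w}" using wnz by simp
    then have "C \<subseteq> span {w}" using card_eq_dim[of "{w}" C] wC dC by simp
    then have "w' \<in> span {w}" using w'C by blast
    then obtain c where c: "w' = c *\<^sub>R w" by (auto simp: span_singleton)
    then have "w' $ f0 = c * w $ f0" by simp
    then have "c = 1" using Wf0 by (simp add: w_def w'_def)
    then show ?thesis using c by (metis scaleR_one vec_lambda_beta w_def w'_def)
  qed
  have lin: "\<alpha> f + \<beta> f \<bullet> x k = \<alpha>' f + \<beta>' f \<bullet> x k" for f k
    using keyeq[of f k] by (simp add: weight_def)
  have "\<alpha> f = \<alpha>' f \<and> \<beta> f = \<beta>' f" for f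
  proof -
    define z :: "real^('d option)" where
      "z = (\<chi> j. case j of None \<Rightarrow> \<alpha> f - \<alpha>' f | Some i \<Rightarrow> \<beta> f $ i - \<beta>' f $ i)"
    have "design_matrix x *v z = 0"
    proof (rule vec_eq_iff[THEN iffD2], rule allI)
      fix k
      have "(design_matrix x *v z) $ k = (\<Sum>j\<in>UNIV. (case j of None \<Rightarrow> 1 | Some i \<Rightarrow> x k $ i) * z $ j)"
        by (simp add: matrix_vector_mult_def design_matrix_def)
      also have "\<dots> = (\<alpha> f - \<alpha>' f) + (\<Sum>i\<in>UNIV. x k $ i * (\<beta> f $ i - \<beta>' f $ i))"
        by (simp add: UNIV_option_conv sum.insert z_def sum.reindex)
      also have "\<dots> = (\<alpha> f + \<beta> f \<bullet> x k) - (\<alpha>' f + \<beta>' f \<bullet> x k)"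
        by (simp add: inner_vec_def right_diff_distrib sum_subtractf mult.commute)
      also have "\<dots> = 0" using lin by simp
      finally show "(design_matrix x *v z) $ k = 0 $ k" by simp
    qed
    then have "z = 0" using G2 matrix_nonfull_linear_equations_eq by blast
    then have "z $ None = 0" "\<And>i. z $ Some i = 0" by simp_all
    then show ?thesis by (simp add: z_def vec_eq_iff)
  qed
  then show ?thesis by auto
qed

end
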